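(* Let $X$ be a compact metrizable space and let $\mathcal F=\{f_1,\dots,f_m\}$ and $\mathcal G=\{g_1,\dots,g_m\}$ be Markov maps on $X$ with respect to partitions $\mathcal A=\{A_1,\dots,A_m\}$ and $\mathcal B=\{B_1,\dots,B_m\}$ respectively. Suppose both are topologically expanding and that they are combinatorially conjugate. Then they are topologically conjugate: there is a homeomorphism $H:X\to X$ with $H\circ f_i(x)=g_i\circ H(x)$ for all $x\in A_i$ and all $i\in\{1,\dots,m\}$.
   Context: A partition of $X$ is a finite family $\mathcal A=\{A_1,\dots,A_m\}$ of closed connected subsets with $A_i\cap A_j$ finite for $i\ne j$ and $\bigcup A_i=X$; its break-points are $\mathrm{bk}(\mathcal A)=\{x: x\in A_i\cap A_j \text{ for some } i\ne j\}$. A Markov map with respect to $\mathcal A$ is a family $\mathcal F=\{f_i\}$ of homeomorphisms $f_i:A_i\to f_i(A_i)\subseteq X$ (not required to agree on overlaps) such that each $f_i(A_i)$ is a union of members of $\mathcal A$ and $f_i(A_i\cap\mathrm{bk}(\mathcal A))\subseteq\mathrm{bk}(\mathcal A)$. Level-$n$ pieces are defined inductively: $\mathcal A^0=\mathcal A$, and $\mathcal A^{n}$ consists of the sets $(f_i|_{A_i})^{-1}(B)$ with $B\in\mathcal A^{n-1}$, $B\subseteq f_i(A_i)$. $\mathcal F$ is topologically expanding if for every $x\in X$ the sets $\mathrm{Int}\big(\bigcup\{A\in\mathcal A^n: x\in A\}\big)$, $n\in\mathbb N$, form a neighborhood basis of $x$. $\mathcal F$ and $\mathcal G$ are combinatorially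 conjugate if there is a homeomorphism $H:X\to X$ with $H(A_i)=B_i$ for all $i$, $H\circ f_i(x)=g_i\circ H(x)$ for every break-point $x\in A_i\cap\mathrm{bk}(\mathcal A)$, and the same Markov matrix: $A_j\subseteq f_i(A_i)$ iff $B_j\subseteq g_i(B_i)$. *)

theory Defs
  imports "HOL-Analysis.Analysis"
begin

definition is_partition :: "'a topology \<Rightarrow> nat \<Rightarrow> (nat \<Rightarrow> 'a set) \<Rightarrow> bool" where
  "is_partition X m A \<longleftrightarrow>
     (\<forall>i<m. closedin X (A i) \<and> connectedin X (A i)) \<and>
     (\<forall>i<m. \<forall>j<m. i \<noteq> j \<longrightarrow> finite (A i \<inter> A j)) \<and>
     (\<Union>i<m. A i) = topspace X"

definition bk :: "nat \<Rightarrow> (nat \<Rightarrow> 'a set) \<Rightarrow> 'a set" where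
  "bk m A = {x. \<exists>i<m. \<exists>j<m. i \<noteq> j \<and> x \<in> A i \<and> x \<in> A j}"

definition markov_map :: "'a topology \<Rightarrow> nat \<Rightarrow> (nat \<Rightarrow> 'a set) \<Rightarrow> (nat \<Rightarrow> 'a \<Rightarrow> 'a) \<Rightarrow> bool" where
  "markov_map X m A f \<longleftrightarrow>
     is_partition X m A \<and>
     (\<forall>i<m. f i ` A i \<subseteq> topspace X \<and>
            homeomorphic_map (subtopology X (A i)) (subtopology X (f i ` A i)) (f i) \<and>
            (\<exists>J \<subseteq> {..<m}. f i ` A i = (\<Union>j\<in>J. A j)) \<and>
            f i ` (A i \<inter> bk m A) \<subseteq> bk m A)"

fun pieces :: "nat \<Rightarrow> (nat \<Rightarrow> 'a set) \<Rightarrow> (nat \<Rightarrow> 'a \<Rightarrow> 'a) \<Rightarrow> nat \<Rightarrow> 'a set set" where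
  "pieces m A f 0 = A ` {..<m}"
| "pieces m A f (Suc n) =
     {{x \<in> A i. f i x \<in> B} | i B. i < m \<and> B \<in> pieces m A f n \<and> B \<subseteq> f i ` A i}"

definition top_expanding :: "'a topology \<Rightarrow> nat \<Rightarrow> (nat \<Rightarrow> 'a set) \<Rightarrow> (nat \<Rightarrow> 'a \<Rightarrow> 'a) \<Rightarrow> bool" where
  "top_expanding X m A f \<longleftrightarrow>
     (\<forall>x \<in> topspace X.
        (\<forall>n. x \<in> X interior_of (\<Union>{P \<in> pieces m A f n. x \<in> P})) \<and>
        (\<forall>U. openin X U \<and> x \<in> U \<longrightarrow>
             (\<exists>n. X interior_of (\<Union>{P \<in> pieces m A f n. x \<in> P}) \<subseteq> U)))"

definition comb_conjugate ::
  "'a topology \<Rightarrow> nat \<Rightarrow> (nat \<Rightarrow> 'a set) \<Rightarrow> (nat \<Rightarrow> 'a \<Rightarrow> 'a)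
     \<Rightarrow> (nat \<Rightarrow> 'a set) \<Rightarrow> (nat \<Rightarrow> 'a \<Rightarrow> 'a) \<Rightarrow> bool" where
  "comb_conjugate X m A f B g \<longleftrightarrow>
     (\<exists>H. homeomorphic_map X X H \<and>
          (\<forall>i<m. H ` A i = B i) \<and>
          (\<forall>i<m. \<forall>x \<in> A i \<inter> bk m A. H (f i x) = g i (H x)) \<and>
          (\<forall>i<m. \<forall>j<m. A j \<subseteq> f i ` A i \<longleftrightarrow> B j \<subseteq> g i ` B i))"

end

theory Submission
  imports Defs
begin

lemma finite_connectedin_sing:
  assumes "Hausdorff_space X" "connectedin X S" "finite S" "a \<in> S" "b \<in> S"
  shows "a = b"
proof (rule ccontr)
  assume ab: "a \<noteq> b"
  have t1: "t1_space X" using assms(1) by (rule Hausdorff_imp_t1_space)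
  have S: "S \<subseteq> topspace X" using assms(2) by (rule connectedin_subset_topspace)
  have c1: "closedin X {a}" using S assms(4) by (intro closedin_t1_singleton[OF t1]) blast
  have c2: "closedin X (S - {a})" using t1 S assms(3) t1_space_closedin_finite
    by (meson Diff_subset finite_Diff subset_trans)
  have "\<not>(\<exists>E1 E2. closedin X E1 \<and> closedin X E2 \<and>
                S \<subseteq> E1 \<union> E2 \<and> E1 \<inter> E2 \<inter> S = {} \<and> E1 \<inter> S \<noteq> {} \<and> E2 \<inter> S \<noteq> {})"
    using assms(2) unfolding connectedin_closedin by (rule conjunct2)
  moreover have "\<exists>E1 E2. closedin X E1 \<and> closedin X E2 \<and>
                S \<subseteq> E1 \<union> E2 \<and> E1 \<inter> E2 \<inter> S = {} \<and> E1 \<inter> S \<noteq> {} \<and> E2 \<inter> S \<noteq> {}"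
  proof (intro exI conjI)
    show "closedin X {a}" by (rule c1)
    show "closedin X (S - {a})" by (rule c2)
  qed (use assms(4,5) ab in blast)+
  ultimately show False by blast
qed

locale MM =
  fixes X :: "'a topology" and m :: nat and A :: "nat \<Rightarrow> 'a set" and f :: "nat \<Rightarrow> 'a \<Rightarrow> 'a"
  assumes mm: "markov_map X m A f" and haus: "Hausdorff_space X"
begin

lemma part: "is_partition X m A" using mm unfolding markov_map_def by blast

lemma A_closed: "i < m \<Longrightarrow> closedin X (A i)"
  using part unfolding is_partition_def by blast

lemma A_sub: "i < m \<Longrightarrow> A i \<subseteq> topspace X"
  using A_closed closedin_subset by blast

lemma A_cover: "x \<in> topspace X \<Longrightarrow> \<exists>i<m. x \<in> A i"
  using part unfolding is_partition_def by blast

lemma A_int: "i < m \<Longrightarrow> j < m \<Longrightarrow> i \<noteq> j \<Longrightarrow> finite (A i \<inter> A j)"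
  using part unfolding is_partition_def by blast

lemma f_top: "i < m \<Longrightarrow> f i ` A i \<subseteq> topspace X"
  using mm unfolding markov_map_def by blast

lemma f_hom: "i < m \<Longrightarrow> homeomorphic_map (subtopology X (A i)) (subtopology X (f i ` A i)) (f i)"
  using mm unfolding markov_map_def by blast

lemma f_img: "i < m \<Longrightarrow> \<exists>J \<subseteq> {..<m}. f i ` A i = (\<Union>j\<in>J. A j)"
  using mm unfolding markov_map_def by blast

lemma f_bk: "i < m \<Longrightarrow> x \<in> A i \<Longrightarrow> x \<in> bk m A \<Longrightarrow> f i x \<in> bk m A"
  using mm unfolding markov_map_def by blast

lemma f_inj: "i < m \<Longrightarrow> inj_on (f i) (A i)"
  using f_hom homeomorphic_imp_injective_map A_sub
  by (metis inf.absorb_iff2 topspace_subtopology)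

lemma f_cont: "i < m \<Longrightarrow> continuous_map (subtopology X (A i)) X (f i)"
  using f_hom homeomorphic_imp_continuous_map continuous_map_into_fulltopology by blast

definition finv where "finv i = inv_into (A i) (f i)"

lemma finv_f: "i < m \<Longrightarrow> x \<in> A i \<Longrightarrow> finv i (f i x) = x"
  unfolding finv_def using f_inj by (simp add: inv_into_f_f)

lemma f_finv: "i < m \<Longrightarrow> y \<in> f i ` A i \<Longrightarrow> f i (finv i y) = y \<and> finv i y \<in> A i"
  unfolding finv_def by (simp add: f_inv_into_f inv_into_into)

lemma finv_cont: "i < m \<Longrightarrow> continuous_map (subtopology X (f i ` A i)) (subtopology X (A i)) (finv i)"
proof -
  assume i: "i < m"
  obtain h where h: "homeomorphic_maps (subtopology X (A i)) (subtopology X (f i ` A i)) (f i) h"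
    using f_hom[OF i] homeomorphic_map_maps by blast
  have c: "continuous_map (subtopology X (f i ` A i)) (subtopology X (A i)) h"
    using h unfolding homeomorphic_maps_def by blast
  have "\<forall>y \<in> topspace (subtopology X (f i ` A i)). h y = finv i y"
  proof
    fix y assume "y \<in> topspace (subtopology X (f i ` A i))"
    then have y: "y \<in> f i ` A i" by simp
    then obtain x where x: "x \<in> A i" "y = f i x" by blast
    have "x \<in> topspace (subtopology X (A i))" using x A_sub[OF i] by auto
    then have "h y = x" using h x unfolding homeomorphic_maps_def by auto
    then show "h y = finv i y" using finv_f[OF i x(1)] x by simp
  qed
  then show ?thesis using c continuous_map_eq by blast
qed

lemma bk_sub: "bk m A \<subseteq> topspace X"
  unfolding bk_def using A_sub by blast

lemma pieces_sub: "P \<in> pieces m A f n \<Longrightarrow> \<exists>i<m. P \<subseteq> A i"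
  by (cases n) auto

lemma pieces_top: "P \<in> pieces m A f n \<Longrightarrow> P \<subseteq> topspace X"
  using pieces_sub A_sub by blast

lemma pieces_finite: "finite (pieces m A f n)"
proof (induction n)
  case 0 then show ?case by simp
next
  case (Suc n)
  have "pieces m A f (Suc n) \<subseteq> (\<lambda>(i,B). {x \<in> A i. f i x \<in> B}) ` ({..<m} \<times> pieces m A f n)"
    by auto
  then show ?case using Suc finite_subset by blast
qed

lemma pieces_closed: "P \<in> pieces m A f n \<Longrightarrow> closedin X P"
proof (induction n arbitrary: P)
  case 0 then show ?case using A_closed by auto
next
  case (Suc n)
  then obtain i B where P: "P = {x \<in> A i. f i x \<in> B}" "i < m" "B \<in> pieces m A f n" by auto
  have "closedin (subtopology X (A i)) {x \<in> topspace (subtopology X (A i)). f i x \<in> B}"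
    using closedin_continuous_map_preimage[OF f_cont[OF P(2)] Suc.IH[OF P(3)]] by simp
  then have "closedin X {x \<in> topspace (subtopology X (A i)). f i x \<in> B}"
    using closedin_trans_full A_closed[OF P(2)] by blast
  moreover have "{x \<in> topspace (subtopology X (A i)). f i x \<in> B} = P"
    using P A_sub by auto
  ultimately show ?case by simp
qed

lemma pieces_conn: "P \<in> pieces m A f n \<Longrightarrow> connectedin X P"
proof (induction n arbitrary: P)
  case 0 then show ?case using part unfolding is_partition_def by auto
next
  case (Suc n)
  then obtain i B where P: "P = {x \<in> A i. f i x \<in> B}" "i < m" "B \<in> pieces m A f n" "B \<subseteq> f i ` A i" by auto
  have "connectedin (subtopology X (f i ` A i)) B"
    using Suc.IH[OF P(3)] P(4) connectedin_subtopology by blast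
  then have "connectedin (subtopology X (A i)) (finv i ` B)"
    using connectedin_continuous_map_image finv_cont[OF P(2)] by blast
  then have "connectedin X (finv i ` B)" using connectedin_subtopology by blast
  moreover have "finv i ` B = P"
  proof
    show "finv i ` B \<subseteq> P" using P f_finv by auto
    show "P \<subseteq> finv i ` B"
    proof
      fix x assume "x \<in> P"
      then show "x \<in> finv i ` B" using P finv_f by (metis (mono_tags, lifting) image_iff mem_Collect_eq)
    qed
  qed
  ultimately show ?case by simp
qed

lemma pieces_int: "P \<in> pieces m A f n \<Longrightarrow> Q \<in> pieces m A f n \<Longrightarrow> P \<noteq> Q \<Longrightarrow> finite (P \<inter> Q)"
proof (induction n arbitrary: P Q)
  case 0 then show ?case using A_int by auto
next
  case (Suc n)
  obtain i B where P: "P = {x \<in> A i. f i x \<in> B}" "i < m" "B \<in> pieces m A f n" "B \<subseteq> f i ` A i"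
    using Suc.prems(1) by auto
  obtain j C where Q: "Q = {x \<in> A j. f j x \<in> C}" "j < m" "C \<in> pieces m A f n" "C \<subseteq> f j ` A j"
    using Suc.prems(2) by auto
  show ?case
  proof (cases "i = j")
    case False
    then have "P \<inter> Q \<subseteq> A i \<inter> A j" using P Q by auto
    then show ?thesis using A_int[OF P(2) Q(2) False] finite_subset by blast
  next
    case True
    then have "B \<noteq> C" using P Q Suc.prems(3) by auto
    then have fin: "finite (B \<inter> C)" using Suc.IH P Q by blast
    have "f i ` (P \<inter> Q) \<subseteq> B \<inter> C" using P Q True by auto
    moreover have "inj_on (f i) (P \<inter> Q)" by (rule inj_on_subset[OF f_inj[OF P(2)]]) (use P in auto)
    ultimately show ?thesis using fin by (meson finite_imageD finite_subset)
  qed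
qed

lemma pieces_cover: "j < m \<Longrightarrow> x \<in> A j \<Longrightarrow> \<exists>P \<in> pieces m A f n. x \<in> P \<and> P \<subseteq> A j"
proof (induction n arbitrary: j x)
  case 0 then show ?case by auto
next
  case (Suc n)
  obtain J where J: "J \<subseteq> {..<m}" "f j ` A j = (\<Union>l\<in>J. A l)" using f_img[OF Suc.prems(1)] by blast
  then obtain l where l: "l \<in> J" "f j x \<in> A l" using Suc.prems by blast
  have lm: "l < m" using J l by auto
  obtain P' where P': "P' \<in> pieces m A f n" "f j x \<in> P'" "P' \<subseteq> A l" using Suc.IH[OF lm l(2)] by blast
  have "P' \<subseteq> f j ` A j" using P'(3) J l by auto
  then have "{y \<in> A j. f j y \<in> P'} \<in> pieces m A f (Suc n)" using P'(1) Suc.prems(1) by auto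
  then show ?case using P'(2) Suc.prems(2) by (intro bexI[where x="{y \<in> A j. f j y \<in> P'}"]) auto
qed

lemma pieces_cover': "x \<in> topspace X \<Longrightarrow> \<exists>P \<in> pieces m A f n. x \<in> P"
  by (meson A_cover pieces_cover)

lemma pieces_nest: "P \<in> pieces m A f N \<Longrightarrow> k \<le> N \<Longrightarrow> infinite P \<Longrightarrow> \<exists>Q \<in> pieces m A f k. P \<subseteq> Q"
proof (induction N arbitrary: k P)
  case 0 then show ?case by auto
next
  case (Suc N)
  obtain i B where P: "P = {x \<in> A i. f i x \<in> B}" "i < m" "B \<in> pieces m A f N" "B \<subseteq> f i ` A i"
    using Suc.prems(1) by auto
  show ?case
  proof (cases k)
    case 0 then show ?thesis using P by auto
  next
    case (Suc k')
    have "f i ` P = B" using P by auto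
    then have infB: "infinite B" using Suc.prems(3) f_inj[OF P(2)] P(1)
      by (metis (no_types, lifting) finite_imageD inj_on_subset mem_Collect_eq subsetI)
    obtain Q' where Q': "Q' \<in> pieces m A f k'" "B \<subseteq> Q'" using Suc.IH[OF P(3) _ infB] Suc Suc.prems(2) by auto
    obtain l where l: "l < m" "Q' \<subseteq> A l" using pieces_sub[OF Q'(1)] by blast
    obtain J where J: "J \<subseteq> {..<m}" "f i ` A i = (\<Union>j\<in>J. A j)" using f_img[OF P(2)] by blast
    have "Q' \<subseteq> f i ` A i"
    proof (cases "l \<in> J")
      case True then show ?thesis using l J by auto
    next
      case False
      have "B \<subseteq> (\<Union>j\<in>J. A l \<inter> A j)" using P(4) J Q' l by auto
      moreover have "finite (\<Union>j\<in>J. A l \<inter> A j)"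
        proof (rule finite_UN_I)
        show "finite J" using J(1) finite_subset by blast
        show "\<And>j. j \<in> J \<Longrightarrow> finite (A l \<inter> A j)" using J(1) False A_int l(1) by blast
      qed
      ultimately show ?thesis using infB finite_subset by blast
    qed
    then have "{x \<in> A i. f i x \<in> Q'} \<in> pieces m A f (Suc k')" using Q'(1) P(2) by auto
    moreover have "P \<subseteq> {x \<in> A i. f i x \<in> Q'}" using P Q' by auto
    ultimately show ?thesis using Suc by blast
  qed
qed

end

locale MMd = MM X m A f + Metric_space M d
  for X :: "'a topology" and m A f and M :: "'a set" and d +
  assumes Xeq: "X = mtopology" and cpt: "compact_space X" and te: "top_expanding X m A f"
begin

lemma topM: "topspace X = M" using Xeq by simp

lemma local_small:
  assumes y: "y \<in> topspace X" and e: "\<epsilon> > 0"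
  shows "\<exists>n. \<forall>P\<in>pieces m A f n. y \<in> P \<longrightarrow> (\<forall>p\<in>P. d y p \<le> \<epsilon>)"
proof -
  have "openin X (mball y \<epsilon>)" using Xeq by simp
  moreover have "y \<in> mball y \<epsilon>" using y e topM by simp
  ultimately obtain n where n: "X interior_of (\<Union>{P \<in> pieces m A f n. y \<in> P}) \<subseteq> mball y \<epsilon>"
    using te y unfolding top_expanding_def by blast
  define R where "R = \<Union>{Q \<in> pieces m A f n. y \<notin> Q}"
  define T where "T = topspace X - R"
  have Rc: "closedin X R" unfolding R_def
    by (rule closedin_Union) (use pieces_finite pieces_closed in auto)
  have To: "openin X T" unfolding T_def using Rc by (simp add: openin_diff)
  have "T \<subseteq> \<Union>{P \<in> pieces m A f n. y \<in> P}"
  proof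
    fix z assume z: "z \<in> T"
    then obtain Q where Q: "Q \<in> pieces m A f n" "z \<in> Q" using pieces_cover' T_def by blast
    then have "y \<in> Q" using z unfolding T_def R_def by blast
    then show "z \<in> \<Union>{P \<in> pieces m A f n. y \<in> P}" using Q by blast
  qed
  then have "T \<subseteq> X interior_of (\<Union>{P \<in> pieces m A f n. y \<in> P})"
    using To by (simp add: interior_of_maximal)
  then have Tb: "T \<subseteq> mball y \<epsilon>" using n by blast
  show ?thesis
  proof (intro exI ballI impI)
    fix P p assume P: "P \<in> pieces m A f n" and yP: "y \<in> P" and pP: "p \<in> P"
    define F where "F = P \<inter> R"
    have "F = (\<Union>Q\<in>{Q \<in> pieces m A f n. y \<notin> Q}. P \<inter> Q)" unfolding F_def R_def by blast
    moreover have "finite (\<Union>Q\<in>{Q \<in> pieces m A f n. y \<notin> Q}. P \<inter> Q)"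
    proof (rule finite_UN_I)
      show "finite {Q \<in> pieces m A f n. y \<notin> Q}" using pieces_finite by simp
      fix Q assume "Q \<in> {Q \<in> pieces m A f n. y \<notin> Q}"
      then have "Q \<in> pieces m A f n" "P \<noteq> Q" using yP by auto
      then show "finite (P \<inter> Q)" using pieces_int P by blast
    qed
    ultimately have Ff: "finite F" by simp
    define C1 where "C1 = P \<inter> mcball y \<epsilon>"
    define C2 where "C2 = F - mcball y \<epsilon>"
    have Ptop: "P \<subseteq> topspace X" using P by (rule pieces_top)
    have c1: "closedin X C1" unfolding C1_def using P pieces_closed Xeq
      by (simp add: closedin_Int)
    have t1: "t1_space X" using haus by (rule Hausdorff_imp_t1_space)
    have c2: "closedin X C2"
      using t1 unfolding t1_space_closedin_finite C2_def
      using Ff Ptop F_def by auto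
    have cov: "P \<subseteq> C1 \<union> C2"
    proof
      fix q assume q: "q \<in> P"
      show "q \<in> C1 \<union> C2"
      proof (cases "q \<in> R")
        case True then show ?thesis unfolding C1_def C2_def F_def using q by blast
      next
        case False
        then have "q \<in> T" unfolding T_def using q Ptop by blast
        then have "q \<in> mball y \<epsilon>" using Tb by blast
        then show ?thesis unfolding C1_def using q by simp
      qed
    qed
    have "\<not>(\<exists>E1 E2. closedin X E1 \<and> closedin X E2 \<and>
                P \<subseteq> E1 \<union> E2 \<and> E1 \<inter> E2 \<inter> P = {} \<and> E1 \<inter> P \<noteq> {} \<and> E2 \<inter> P \<noteq> {})"
      using pieces_conn[OF P] unfolding connectedin_closedin by (rule conjunct2)
    moreover have "C1 \<inter> C2 \<inter> P = {}" unfolding C1_def C2_def by blast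
    moreover have "y \<in> M" using y topM by simp
    then have "C1 \<inter> P \<noteq> {}" unfolding C1_def using yP e by auto
    ultimately have "C2 \<inter> P = {}" using c1 c2 cov by blast
    then have "p \<in> C1" using pP cov by blast
    then show "d y p \<le> \<epsilon>" unfolding C1_def by simp
  qed
qed

lemma unif_small:
  assumes e: "\<epsilon> > 0"
  shows "\<exists>N. \<forall>Q\<in>pieces m A f N. \<forall>a\<in>Q. \<forall>b\<in>Q. d a b \<le> 2 * \<epsilon>"
proof -
  have "\<forall>y\<in>topspace X. \<exists>n. \<forall>P\<in>pieces m A f n. y \<in> P \<longrightarrow> (\<forall>p\<in>P. d y p \<le> \<epsilon>)"
    using local_small e by blast
  then obtain nf where nf: "\<And>y P p. y \<in> topspace X \<Longrightarrow> P \<in> pieces m A f (nf y) \<Longrightarrow> y \<in> P \<Longrightarrow> p \<in> P \<Longrightarrow> d y p \<le> \<epsilon>"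
    by metis
  define W where "W y = topspace X - \<Union>{P \<in> pieces m A f (nf y). y \<notin> P}" for y
  have Wo: "openin X (W y)" for y
  proof -
    have "closedin X (\<Union>{P \<in> pieces m A f (nf y). y \<notin> P})"
      by (rule closedin_Union) (use pieces_finite pieces_closed in auto)
    then show ?thesis unfolding W_def by (simp add: openin_diff)
  qed
  have Wc: "topspace X \<subseteq> \<Union>(W ` topspace X)"
  proof
    fix y assume "y \<in> topspace X"
    moreover then have "y \<in> W y" unfolding W_def by blast
    ultimately show "y \<in> \<Union>(W ` topspace X)" by blast
  qed
  have "compactin X (topspace X)" using cpt by (simp add: compact_space_def)
  then obtain F where F: "finite F" "F \<subseteq> W ` topspace X" "topspace X \<subseteq> \<Union>F"
    unfolding compactin_def using Wo Wc
    by (smt (verit, ccfv_threshold) imageE)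
  then obtain Y where Y: "Y \<subseteq> topspace X" "finite Y" "F = W ` Y"
    by (meson finite_subset_image)
  define N where "N = (\<Sum>y\<in>Y. nf y)"
  show ?thesis
  proof (intro exI ballI)
    fix Q a b assume Q: "Q \<in> pieces m A f N" and a: "a \<in> Q" and b: "b \<in> Q"
    show "d a b \<le> 2 * \<epsilon>"
    proof (cases "a = b")
      case True
      have "b \<in> M" using b pieces_top[OF Q] topM by blast
      then show ?thesis using e True by simp
    next
      case False
      then have infQ: "infinite Q" using finite_connectedin_sing[OF haus pieces_conn[OF Q] _ a b] by blast
      have aX: "a \<in> topspace X" using a pieces_top[OF Q] by blast
      then obtain y where y: "y \<in> Y" "a \<in> W y" using F Y by blast
      have le: "nf y \<le> N" unfolding N_def using y(1) Y(2) by (simp add: member_le_sum)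
      obtain Q0 where Q0: "Q0 \<in> pieces m A f (nf y)" "Q \<subseteq> Q0" using pieces_nest[OF Q le infQ] by blast
      have yX: "y \<in> topspace X" using y Y by blast
      have yQ0: "y \<in> Q0"
      proof (rule ccontr)
        assume "y \<notin> Q0"
        then have "a \<notin> W y" unfolding W_def using Q0 a by blast
        then show False using y by blast
      qed
      have "d y a \<le> \<epsilon>" "d y b \<le> \<epsilon>" using nf[OF yX Q0(1) yQ0] Q0(2) a b by auto
      moreover have "d a b \<le> d y a + d y b"
        using triangle'' aX yX b pieces_top[OF Q] topM by blast
      ultimately show ?thesis by simp
    qed
  qed
qed

end

locale Conj = F: MM X m A f + G: MMd X m B g M d
  for X :: "'a topology" and m A f B g M d +
  fixes H0 :: "'a \<Rightarrow> 'a"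
  assumes H0hom: "homeomorphic_map X X H0"
  and H0A: "\<And>i. i < m \<Longrightarrow> H0 ` A i = B i"
  and H0bk: "\<And>i x. i < m \<Longrightarrow> x \<in> A i \<Longrightarrow> x \<in> bk m A \<Longrightarrow> H0 (f i x) = g i (H0 x)"
  and mat: "\<And>i j. i < m \<Longrightarrow> j < m \<Longrightarrow> A j \<subseteq> f i ` A i \<longleftrightarrow> B j \<subseteq> g i ` B i"
begin

primrec Hs :: "nat \<Rightarrow> 'a \<Rightarrow> 'a" where
  "Hs 0 = H0"
| "Hs (Suc n) = (\<lambda>x. G.finv (LEAST i. i < m \<and> x \<in> A i) (Hs n (f (LEAST i. i < m \<and> x \<in> A i) x)))"

definition Inv where
  "Inv h \<longleftrightarrow> inj_on h (topspace X) \<and> (\<forall>j<m. h ` A j = B j) \<and> (\<forall>x\<in>bk m A. h x = H0 x)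
     \<and> continuous_map X X h"

lemma H0inj: "inj_on H0 (topspace X)" using H0hom by (rule homeomorphic_imp_injective_map)

lemma Inv0: "Inv H0"
  unfolding Inv_def using H0inj H0A homeomorphic_imp_continuous_map[OF H0hom] by blast

lemma Inv_top: "Inv h \<Longrightarrow> x \<in> topspace X \<Longrightarrow> h x \<in> topspace X"
  unfolding Inv_def using continuous_map_image_subset_topspace by blast

lemma imgeq:
  assumes h: "\<forall>j<m. h ` A j = B j" and i: "i < m"
  shows "h ` (f i ` A i) = g i ` B i"
proof -
  obtain J where J: "J \<subseteq> {..<m}" "f i ` A i = (\<Union>j\<in>J. A j)" using F.f_img[OF i] by blast
  obtain J' where J': "J' \<subseteq> {..<m}" "g i ` B i = (\<Union>j\<in>J'. B j)" using G.f_img[OF i] by blast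
  have "h ` (f i ` A i) = (\<Union>j\<in>J. h ` A j)" using J by (simp add: image_UN)
  also have "\<dots> = (\<Union>j\<in>J. B j)" 
  proof (rule SUP_cong[OF refl])
    fix j assume "j \<in> J"
    then have "j < m" using J by auto
    then show "h ` A j = B j" using h by blast
  qed
  finally have hJ: "h ` (f i ` A i) = (\<Union>j\<in>J. B j)" .
  have "(\<Union>j\<in>J. B j) = g i ` B i"
  proof
    show "(\<Union>j\<in>J. B j) \<subseteq> g i ` B i"
    proof (rule UN_least)
      fix j assume j: "j \<in> J"
      then have jm: "j < m" using J by auto
      have "A j \<subseteq> f i ` A i" using J j by auto
      then show "B j \<subseteq> g i ` B i" using mat[OF i jm] by simp
    qed
    show "g i ` B i \<subseteq> (\<Union>j\<in>J. B j)"
    proof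
      fix y assume "y \<in> g i ` B i"
      then obtain j where j: "j \<in> J'" "y \<in> B j" using J' by auto
      have jm: "j < m" using j J' by auto
      have "B j \<subseteq> g i ` B i" using J' j by auto
      then have "A j \<subseteq> f i ` A i" using mat[OF i jm] by auto
      moreover have "B j = h ` A j" using h jm by simp
      ultimately have "B j \<subseteq> h ` (f i ` A i)" by (simp add: image_mono)
      then show "y \<in> (\<Union>j\<in>J. B j)" using j hJ by auto
    qed
  qed
  then show ?thesis using hJ by simp
qed

lemma bk_val:
  assumes "Inv (Hs n)" "k < m" "x \<in> A k" "x \<in> bk m A"
  shows "G.finv k (Hs n (f k x)) = H0 x"
proof -
  have "f k x \<in> bk m A" using F.f_bk assms by blast
  then have "Hs n (f k x) = H0 (f k x)" using assms(1) unfolding Inv_def by blast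
  also have "\<dots> = g k (H0 x)" using H0bk assms by blast
  finally have "Hs n (f k x) = g k (H0 x)" .
  moreover have "H0 x \<in> B k" using H0A assms by blast
  ultimately show ?thesis using G.finv_f assms(2) by simp
qed

lemma formula:
  assumes I: "Inv (Hs n)" and i: "i < m" and x: "x \<in> A i"
  shows "Hs (Suc n) x = G.finv i (Hs n (f i x))"
proof -
  define j where "j = (LEAST i. i < m \<and> x \<in> A i)"
  have j: "j < m \<and> x \<in> A j" unfolding j_def by (rule LeastI[of _ i]) (use i x in blast)
  have e: "Hs (Suc n) x = G.finv j (Hs n (f j x))" unfolding j_def by simp
  show ?thesis
  proof (cases "j = i")
    case True then show ?thesis using e by simp
  next
    case False
    then have "x \<in> bk m A" unfolding bk_def using i x j by blast
    then show ?thesis using e bk_val[OF I] i x j by metis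
  qed
qed

lemma formula2:
  assumes I: "Inv (Hs n)" and i: "i < m" and x: "x \<in> A i"
  shows "Hs (Suc n) x \<in> B i \<and> g i (Hs (Suc n) x) = Hs n (f i x)"
proof -
  have "Hs n (f i x) \<in> g i ` B i" using imgeq[of "Hs n" i] I i x unfolding Inv_def by blast
  then show ?thesis using formula[OF I i x] G.f_finv[OF i] by simp
qed

lemma same_i_inj:
  assumes I: "Inv (Hs n)" and i: "i < m" and x: "x \<in> A i" and y: "y \<in> A i"
    and e: "Hs (Suc n) x = Hs (Suc n) y"
  shows "x = y"
proof -
  have "Hs n (f i x) = Hs n (f i y)" using formula2[OF I i x] formula2[OF I i y] e by metis
  moreover have "f i x \<in> topspace X" "f i y \<in> topspace X" using F.f_top[OF i] x y by auto
  ultimately have "f i x = f i y" using I unfolding Inv_def by (meson inj_onD)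
  then show ?thesis using F.f_inj[OF i] x y by (meson inj_onD)
qed

lemma Inv_Suc: "Inv (Hs n) \<Longrightarrow> Inv (Hs (Suc n))"
proof -
  assume I: "Inv (Hs n)"
  have img: "Hs (Suc n) ` A i = B i" if i: "i < m" for i
  proof -
    have "Hs (Suc n) ` A i = G.finv i ` (Hs n ` (f i ` A i))"
      using formula[OF I i] by (auto simp: image_iff)
    also have "\<dots> = G.finv i ` (g i ` B i)" using imgeq[of "Hs n" i] I i unfolding Inv_def by simp
    also have "\<dots> = B i" using G.finv_f[OF i] by (auto simp: image_iff)
    finally show ?thesis .
  qed
  have bkv: "Hs (Suc n) x = H0 x" if x: "x \<in> bk m A" for x
  proof -
    obtain k where k: "k < m" "x \<in> A k" using x unfolding bk_def by blast
    show ?thesis using formula[OF I k] bk_val[OF I k x] by simp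
  qed
  have inj: "inj_on (Hs (Suc n)) (topspace X)"
  proof (rule inj_onI)
    fix x y assume x: "x \<in> topspace X" and y: "y \<in> topspace X" and e: "Hs (Suc n) x = Hs (Suc n) y"
    obtain i where i: "i < m" "x \<in> A i" using F.A_cover x by blast
    obtain j where j: "j < m" "y \<in> A j" using F.A_cover y by blast
    show "x = y"
    proof (cases "i = j")
      case True then show ?thesis using same_i_inj[OF I i] j e by blast
    next
      case False
      let ?z = "Hs (Suc n) x"
      have zi: "?z \<in> B i" using img i by blast
      have zj: "?z \<in> B j" using img j e by blast
      have zbk: "?z \<in> bk m B" unfolding bk_def using zi zj i j False by blast
      have bkB: "\<exists>x' \<in> A k \<inter> bk m A. H0 x' = z" if k: "k < m" "z \<in> B k" "z \<in> bk m B" for k z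
      proof -
        obtain k1 k2 where kk: "k1 < m" "k2 < m" "k1 \<noteq> k2" "z \<in> B k1" "z \<in> B k2"
          using k(3) unfolding bk_def by blast
        obtain x1 where x1: "x1 \<in> A k1" "H0 x1 = z" using kk H0A by (metis imageE)
        obtain x2 where x2: "x2 \<in> A k2" "H0 x2 = z" using kk H0A by (metis imageE)
        obtain x3 where x3: "x3 \<in> A k" "H0 x3 = z" using k H0A by (metis imageE)
        have "x1 = x2" "x1 = x3" using x1 x2 x3 kk k F.A_sub H0inj by (metis inj_onD subsetD)+
        then have "x3 \<in> bk m A" unfolding bk_def using x1 x2 kk by blast
        then show ?thesis using x3 by blast
      qed
      obtain x' where x': "x' \<in> A i" "x' \<in> bk m A" "H0 x' = ?z" using bkB[OF i(1) zi zbk] by blast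
      obtain y' where y': "y' \<in> A j" "y' \<in> bk m A" "H0 y' = ?z" using bkB[OF j(1) zj zbk] by blast
      have "x' = x" using same_i_inj[OF I i(1) x'(1) i(2)] bkv[OF x'(2)] x'(3) by simp
      moreover have "y' = y" using same_i_inj[OF I j(1) y'(1) j(2)] bkv[OF y'(2)] y'(3) e by simp
      moreover have "x' = y'" using x' y' H0inj F.A_sub i j by (metis inj_onD subsetD)
      ultimately show ?thesis by simp
    qed
  qed
  have cont: "continuous_map X X (Hs (Suc n))"
  proof -
    have ci: "continuous_map (subtopology X (A i)) X (G.finv i \<circ> Hs n \<circ> f i)" if i: "i < m" for i
    proof -
      have c1: "continuous_map (subtopology X (A i)) (subtopology X (f i ` A i)) (f i)"
        using F.f_hom[OF i] by (rule homeomorphic_imp_continuous_map)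
      have "continuous_map (subtopology X (f i ` A i)) X (Hs n)"
        using I unfolding Inv_def by (simp add: continuous_map_from_subtopology)
      moreover have "Hs n \<in> topspace (subtopology X (f i ` A i)) \<rightarrow> g i ` B i"
        using imgeq[of "Hs n" i] I i unfolding Inv_def by auto
      ultimately have c2: "continuous_map (subtopology X (f i ` A i)) (subtopology X (g i ` B i)) (Hs n)"
        by (simp add: continuous_map_in_subtopology)
      have c3: "continuous_map (subtopology X (g i ` B i)) X (G.finv i)"
        using G.finv_cont[OF i] by (rule continuous_map_into_fulltopology)
      show ?thesis using c1 c2 c3 by (meson continuous_map_compose)
    qed
    obtain gg where gg: "continuous_map X X gg"
      "\<And>x i. i \<in> {..<m} \<Longrightarrow> x \<in> topspace X \<inter> A i \<Longrightarrow> gg x = (\<lambda>i. G.finv i \<circ> Hs n \<circ> f i) i x"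
    proof (rule pasting_lemma_exists_closed[where I="{..<m}" and X=X and T=A and f="\<lambda>i. G.finv i \<circ> Hs n \<circ> f i" and Y=X])
      show "finite {..<m}" by simp
      show "topspace X \<subseteq> \<Union>(A ` {..<m})" using F.A_cover by blast
      show "\<And>i. i \<in> {..<m} \<Longrightarrow> closedin X (A i)" using F.A_closed by simp
      show "\<And>i. i \<in> {..<m} \<Longrightarrow> continuous_map (subtopology X (A i)) X (G.finv i \<circ> Hs n \<circ> f i)"
        using ci by simp
      show "\<And>i j x. i \<in> {..<m} \<Longrightarrow> j \<in> {..<m} \<Longrightarrow> x \<in> topspace X \<inter> A i \<inter> A j \<Longrightarrow>
              (G.finv i \<circ> Hs n \<circ> f i) x = (G.finv j \<circ> Hs n \<circ> f j) x"
        using formula[OF I] by (metis IntD1 IntD2 comp_apply lessThan_iff)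
    qed blast
    have "\<forall>x\<in>topspace X. gg x = Hs (Suc n) x"
    proof
      fix x assume x: "x \<in> topspace X"
      then obtain i where i: "i < m" "x \<in> A i" using F.A_cover by blast
      show "gg x = Hs (Suc n) x" using gg(2)[of i x] formula[OF I i(1) i(2)] x i by simp
    qed
    then show ?thesis using gg(1) continuous_map_eq by blast
  qed
  show "Inv (Hs (Suc n))" unfolding Inv_def using img bkv inj cont by blast
qed

lemma Inv_Hs: "Inv (Hs n)"
  by (induction n) (use Inv0 Inv_Suc in auto)

end

context Conj begin

lemma Lpre:
  assumes i: "i < m" and P': "P' \<subseteq> f i ` A i"
  shows "Hs (Suc n) ` {x \<in> A i. f i x \<in> P'} = {y \<in> B i. g i y \<in> Hs n ` P'}"
proof
  have I: "Inv (Hs n)" by (rule Inv_Hs)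
  show "Hs (Suc n) ` {x \<in> A i. f i x \<in> P'} \<subseteq> {y \<in> B i. g i y \<in> Hs n ` P'}"
  proof
    fix y assume "y \<in> Hs (Suc n) ` {x \<in> A i. f i x \<in> P'}"
    then obtain x where x: "x \<in> A i" "f i x \<in> P'" "y = Hs (Suc n) x" by blast
    then show "y \<in> {y \<in> B i. g i y \<in> Hs n ` P'}" using formula2[OF I i x(1)] by auto
  qed
  show "{y \<in> B i. g i y \<in> Hs n ` P'} \<subseteq> Hs (Suc n) ` {x \<in> A i. f i x \<in> P'}"
  proof
    fix y assume "y \<in> {y \<in> B i. g i y \<in> Hs n ` P'}"
    then obtain p where y: "y \<in> B i" "g i y = Hs n p" "p \<in> P'" by blast
    then obtain x where x: "x \<in> A i" "p = f i x" using P' by blast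
    have "g i (Hs (Suc n) x) = g i y" "Hs (Suc n) x \<in> B i" using formula2[OF I i x(1)] y x by auto
    then have "Hs (Suc n) x = y" using G.f_inj[OF i] y(1) by (meson inj_onD)
    then show "y \<in> Hs (Suc n) ` {x \<in> A i. f i x \<in> P'}" using x y by blast
  qed
qed

lemma stab: "k \<le> n \<Longrightarrow> P \<in> pieces m A f k \<Longrightarrow> Hs n ` P \<in> pieces m B g k \<and> Hs (Suc n) ` P = Hs n ` P"
proof (induction k arbitrary: n P)
  case 0
  then obtain j where j: "j < m" "P = A j" by auto
  have "Hs n ` A j = B j" "Hs (Suc n) ` A j = B j" using Inv_Hs j(1) unfolding Inv_def by blast+
  then show ?case using j by simp
next
  case (Suc k)
  obtain i P' where P: "P = {x \<in> A i. f i x \<in> P'}" "i < m" "P' \<in> pieces m A f k" "P' \<subseteq> f i ` A i"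
    using Suc.prems(2) by auto
  obtain n0 where n0: "n = Suc n0" "k \<le> n0" using Suc.prems(1) by (metis Suc_le_D Suc_le_mono)
  have IH: "Hs n0 ` P' \<in> pieces m B g k" "Hs (Suc n0) ` P' = Hs n0 ` P'" using Suc.IH[OF n0(2) P(3)] by auto
  have e1: "Hs n ` P = {y \<in> B i. g i y \<in> Hs n0 ` P'}" using Lpre[OF P(2) P(4)] n0 P(1) by simp
  have e2: "Hs (Suc n) ` P = {y \<in> B i. g i y \<in> Hs n0 ` P'}" using Lpre[OF P(2) P(4), of "Suc n0"] n0 P(1) IH(2) by simp
  have "Hs n0 ` P' \<subseteq> Hs n0 ` (f i ` A i)" using P(4) by (rule image_mono)
  also have "\<dots> = g i ` B i" using imgeq[of "Hs n0" i] Inv_Hs P(2) unfolding Inv_def by blast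
  finally have "Hs n0 ` P' \<subseteq> g i ` B i" .
  then have "{y \<in> B i. g i y \<in> Hs n0 ` P'} \<in> pieces m B g (Suc k)" using IH(1) P(2) by auto
  then show ?case using e1 e2 by simp
qed

lemma stab2: "k \<le> n \<Longrightarrow> P \<in> pieces m A f k \<Longrightarrow> Hs (n + p) ` P = Hs n ` P"
proof (induction p)
  case 0 then show ?case by simp
next
  case (Suc p)
  have "Hs (Suc (n + p)) ` P = Hs (n + p) ` P" using stab[of k "n + p" P] Suc.prems by simp
  then show ?case using Suc by simp
qed

lemma HsM: "x \<in> topspace X \<Longrightarrow> Hs n x \<in> M"
  using Inv_top[OF Inv_Hs] G.topM by blast

lemma unif:
  assumes e: "\<epsilon> > 0"
  shows "\<exists>N. \<forall>n\<ge>N. \<forall>x\<in>topspace X. d (Hs n x) (Hs N x) \<le> 2 * \<epsilon>"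
proof -
  obtain N where N: "\<forall>Q\<in>pieces m B g N. \<forall>a\<in>Q. \<forall>b\<in>Q. d a b \<le> 2 * \<epsilon>"
    using G.unif_small[OF e] by blast
  show ?thesis
  proof (intro exI allI impI ballI)
    fix n x assume n: "N \<le> n" and x: "x \<in> topspace X"
    obtain P where P: "P \<in> pieces m A f N" "x \<in> P" using F.pieces_cover'[OF x] by blast
    have Q: "Hs N ` P \<in> pieces m B g N" using stab[OF le_refl P(1)] by blast
    have "Hs n ` P = Hs N ` P" using stab2[OF le_refl P(1), of "n - N"] n by simp
    then have hn: "Hs n x \<in> Hs N ` P" using P(2) by blast
    have hN: "Hs N x \<in> Hs N ` P" using P(2) by blast
    have NQ: "\<forall>a\<in>Hs N ` P. \<forall>b\<in>Hs N ` P. d a b \<le> 2 * \<epsilon>" by (rule bspec[OF N Q])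
    show "d (Hs n x) (Hs N x) \<le> 2 * \<epsilon>" using bspec[OF bspec[OF NQ hn] hN] .
  qed
qed

lemma lim_exists:
  "\<exists>H. continuous_map X X H \<and> (\<forall>\<epsilon>>0. \<forall>\<^sub>F n in sequentially. \<forall>x\<in>topspace X. d (Hs n x) (H x) < \<epsilon>)"
proof -
  have mc: "G.mcomplete" using G.compact_space_imp_mcomplete G.cpt G.Xeq by simp
  have contf: "\<forall>\<^sub>F n in sequentially. continuous_map X G.mtopology (Hs n)"
    using Inv_Hs G.Xeq unfolding Inv_def by simp
  have C: "\<exists>N. \<forall>a b x. N \<le> a \<longrightarrow> N \<le> b \<longrightarrow> x \<in> topspace X \<longrightarrow> d (Hs a x) (Hs b x) < \<epsilon>"
    if e: "\<epsilon> > 0" for \<epsilon>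
  proof -
    obtain N where N: "\<forall>n\<ge>N. \<forall>x\<in>topspace X. d (Hs n x) (Hs N x) \<le> 2 * (\<epsilon> / 8)"
      using unif[of "\<epsilon> / 8"] e by auto
    show ?thesis
    proof (intro exI allI impI)
      fix a b x assume a: "N \<le> a" and b: "N \<le> b" and x: "x \<in> topspace X"
      have "d (Hs a x) (Hs b x) \<le> d (Hs a x) (Hs N x) + d (Hs N x) (Hs b x)"
        using G.triangle HsM[OF x] by blast
      also have "\<dots> = d (Hs a x) (Hs N x) + d (Hs b x) (Hs N x)" using G.commute by simp
      also have "\<dots> \<le> 2 * (\<epsilon> / 8) + 2 * (\<epsilon> / 8)" using N a b x by (meson add_mono)
      finally show "d (Hs a x) (Hs b x) < \<epsilon>" using e by simp
    qed
  qed
  obtain H where H: "continuous_map X G.mtopology H"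
    "\<And>\<epsilon>. 0 < \<epsilon> \<Longrightarrow> \<forall>\<^sub>F n in sequentially. \<forall>x\<in>topspace X. d (Hs n x) (H x) < \<epsilon>"
    using G.continuous_map_uniformly_Cauchy_limit[OF mc contf C] by blast
  then show ?thesis using G.Xeq by auto
qed

end

context Conj begin

lemma limit_pt:
  assumes H: "continuous_map X X H"
    and U: "\<forall>\<epsilon>>0. \<forall>\<^sub>F n in sequentially. \<forall>x\<in>topspace X. d (Hs n x) (H x) < \<epsilon>"
    and x: "x \<in> topspace X"
  shows "limitin X (\<lambda>n. Hs (n + k) x) (H x) sequentially"
proof -
  have HxM: "H x \<in> M" using H x G.topM continuous_map_image_subset_topspace by blast
  have "\<forall>\<^sub>F n in sequentially. Hs (n + k) x \<in> M \<and> d (Hs (n + k) x) (H x) < \<epsilon>" if e: "\<epsilon> > 0" for \<epsilon>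
  proof -
    obtain N where N: "\<forall>n\<ge>N. \<forall>x\<in>topspace X. d (Hs n x) (H x) < \<epsilon>"
      using U e unfolding eventually_sequentially by blast
    show ?thesis unfolding eventually_sequentially
      using N x HsM by (metis le_add1 order_trans)
  qed
  then have "limitin G.mtopology (\<lambda>n. Hs (n + k) x) (H x) sequentially"
    unfolding G.limitin_metric using HxM by blast
  then show ?thesis using G.Xeq by simp
qed

lemma conj_limit:
  assumes H: "continuous_map X X H"
    and U: "\<forall>\<epsilon>>0. \<forall>\<^sub>F n in sequentially. \<forall>x\<in>topspace X. d (Hs n x) (H x) < \<epsilon>"
    and i: "i < m" and x: "x \<in> A i"
  shows "H (f i x) = g i (H x)"
proof -
  have xX: "x \<in> topspace X" using x F.A_sub[OF i] by blast
  have fxX: "f i x \<in> topspace X" using x F.f_top[OF i] by blast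
  have L1: "limitin X (\<lambda>n. Hs (n + 1) x) (H x) sequentially" by (rule limit_pt[OF H U xX])
  have inB: "\<forall>\<^sub>F n in sequentially. Hs (n + 1) x \<in> B i"
    using formula2[OF Inv_Hs i x] by simp
  have HxB: "H x \<in> B i"
    by (rule limitin_closedin[OF L1 G.A_closed[OF i] inB]) simp
  have "limitin (subtopology X (B i)) (\<lambda>n. Hs (n + 1) x) (H x) sequentially"
    using L1 inB HxB by (simp add: limitin_subtopology)
  then have L2: "limitin X (g i \<circ> (\<lambda>n. Hs (n + 1) x)) (g i (H x)) sequentially"
    by (rule continuous_map_limit[OF G.f_cont[OF i]])
  have "(g i \<circ> (\<lambda>n. Hs (n + 1) x)) = (\<lambda>n. Hs (n + 0) (f i x))"
    using formula2[OF Inv_Hs i x] by (simp add: fun_eq_iff)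
  moreover have "limitin X (\<lambda>n. Hs (n + 0) (f i x)) (H (f i x)) sequentially" by (rule limit_pt[OF H U fxX])
  ultimately show ?thesis using L2 limitin_Hausdorff_unique F.haus by fastforce
qed

end

locale Two = C1: Conj X m A f B g M d H0 + C2: Conj X m B g A f M d h
  for X :: "'a topology" and m A f B g M d H0 h +
  assumes hH0: "\<And>x. x \<in> topspace X \<Longrightarrow> h (H0 x) = x"
begin

lemma inv_rel: "x \<in> topspace X \<Longrightarrow> C2.Hs n (C1.Hs n x) = x"
proof (induction n arbitrary: x)
  case 0 then show ?case using hH0 by simp
next
  case (Suc n)
  obtain i where i: "i < m" "x \<in> A i" using C1.F.A_cover Suc.prems by blast
  have z: "C1.Hs (Suc n) x \<in> B i" "g i (C1.Hs (Suc n) x) = C1.Hs n (f i x)"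
    using C1.formula2[OF C1.Inv_Hs i] by auto
  have "C2.Hs (Suc n) (C1.Hs (Suc n) x) = C1.F.finv i (C2.Hs n (g i (C1.Hs (Suc n) x)))"
    using C2.formula[OF C2.Inv_Hs i(1) z(1)] .
  also have "\<dots> = C1.F.finv i (f i x)"
  proof -
    have "f i x \<in> topspace X" using C1.F.f_top i by blast
    then have "C2.Hs n (C1.Hs n (f i x)) = f i x" by (rule Suc.IH)
    then show ?thesis by (simp only: z(2))
  qed
  also have "\<dots> = x" using C1.F.finv_f i by simp
  finally show ?case .
qed

lemma KH:
  assumes H: "continuous_map X X H"
    and UH: "\<forall>\<epsilon>>0. \<forall>\<^sub>F n in sequentially. \<forall>x\<in>topspace X. d (C1.Hs n x) (H x) < \<epsilon>"
    and K: "continuous_map X X K"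
    and UK: "\<forall>\<epsilon>>0. \<forall>\<^sub>F n in sequentially. \<forall>x\<in>topspace X. d (C2.Hs n x) (K x) < \<epsilon>"
    and x: "x \<in> topspace X"
  shows "K (H x) = x"
proof -
  have HxX: "H x \<in> topspace X" using H x continuous_map_image_subset_topspace by blast
  have KHx: "K (H x) \<in> M" using K HxX C1.G.topM continuous_map_image_subset_topspace by blast
  have xM: "x \<in> M" using x C1.G.topM by blast
  have "limitin X (\<lambda>n. C1.Hs (n + 0) x) (H x) sequentially" by (rule C1.limit_pt[OF H UH x])
  then have "limitin X (K \<circ> (\<lambda>n. C1.Hs (n + 0) x)) (K (H x)) sequentially"
    by (rule continuous_map_limit[OF K])
  then have L: "limitin C1.G.mtopology (\<lambda>n. K (C1.Hs n x)) (K (H x)) sequentially"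
    using C1.G.Xeq by (simp add: o_def)
  have "d x (K (H x)) < \<epsilon>" if e: "\<epsilon> > 0" for \<epsilon>
  proof -
    have e2: "\<epsilon> / 2 > 0" using e by simp
    have ev1: "\<forall>\<^sub>F n in sequentially. K (C1.Hs n x) \<in> M \<and> d (K (C1.Hs n x)) (K (H x)) < \<epsilon> / 2"
      using L e2 unfolding C1.G.limitin_metric by blast
    have ev2: "\<forall>\<^sub>F n in sequentially. \<forall>y\<in>topspace X. d (C2.Hs n y) (K y) < \<epsilon> / 2"
      using UK e2 by blast
    obtain n where n: "K (C1.Hs n x) \<in> M" "d (K (C1.Hs n x)) (K (H x)) < \<epsilon> / 2"
      "\<forall>y\<in>topspace X. d (C2.Hs n y) (K y) < \<epsilon> / 2"
      using eventually_happens'[OF _ eventually_conj[OF ev1 ev2]] by auto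
    have hx: "C1.Hs n x \<in> topspace X" using C1.Inv_top[OF C1.Inv_Hs x] .
    have d1: "d x (K (C1.Hs n x)) < \<epsilon> / 2" using n(3) hx inv_rel[OF x] by metis
    have "d x (K (H x)) \<le> d x (K (C1.Hs n x)) + d (K (C1.Hs n x)) (K (H x))"
      using C1.G.triangle xM n(1) KHx by blast
    then show ?thesis using d1 n(2) by simp
  qed
  then have "d x (K (H x)) = 0"
    by (metis C1.G.nonneg order_less_irrefl order_le_less)
  then show ?thesis using xM KHx C1.G.zero by metis
qed

end

theorem proposition2p6:
  fixes X :: "'a topology" and m :: nat
    and A B :: "nat \<Rightarrow> 'a set" and f g :: "nat \<Rightarrow> 'a \<Rightarrow> 'a"
  assumes "compact_space X" and "metrizable_space X"
    and "markov_map X m A f" and "markov_map X m B g"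
    and "top_expanding X m A f" and "top_expanding X m B g"
    and "comb_conjugate X m A f B g"
  shows "\<exists>H. homeomorphic_map X X H \<and> (\<forall>i<m. \<forall>x \<in> A i. H (f i x) = g i (H x))"
proof -
  obtain M d where Md: "Metric_space M d" "X = Metric_space.mtopology M d"
    using assms(2) unfolding metrizable_space_def by blast
  have haus: "Hausdorff_space X" using Md Metric_space.Hausdorff_space_mtopology by metis
  obtain H0 where H0: "homeomorphic_map X X H0" "\<forall>i<m. H0 ` A i = B i"
    "\<forall>i<m. \<forall>x \<in> A i \<inter> bk m A. H0 (f i x) = g i (H0 x)"
    "\<forall>i<m. \<forall>j<m. A j \<subseteq> f i ` A i \<longleftrightarrow> B j \<subseteq> g i ` B i"
    using assms(7) unfolding comb_conjugate_def by blast
  obtain h where hm: "homeomorphic_maps X X H0 h" using H0(1) homeomorphic_map_maps by blast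
  have hH0: "\<And>x. x \<in> topspace X \<Longrightarrow> h (H0 x) = x" using hm unfolding homeomorphic_maps_def by blast
  have H0h: "\<And>y. y \<in> topspace X \<Longrightarrow> H0 (h y) = y" using hm unfolding homeomorphic_maps_def by blast
  have hhom: "homeomorphic_map X X h" using hm homeomorphic_maps_sym homeomorphic_maps_imp_map by blast
  have mmA: "MM X m A f" by (rule MM.intro) (fact assms(3), fact haus)
  have mmB: "MM X m B g" by (rule MM.intro) (fact assms(4), fact haus)
  have mmdA: "MMd X m A f M d" unfolding MMd_def MMd_axioms_def using mmA Md assms(1,5) by blast
  have mmdB: "MMd X m B g M d" unfolding MMd_def MMd_axioms_def using mmB Md assms(1,6) by blast
  have Asub: "\<And>i. i < m \<Longrightarrow> A i \<subseteq> topspace X" using MM.A_sub[OF mmA] by blast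
  have Bsub: "\<And>i. i < m \<Longrightarrow> B i \<subseteq> topspace X" using MM.A_sub[OF mmB] by blast
  have hB: "h ` B i = A i" if i: "i < m" for i
  proof -
    have "h ` B i = h ` H0 ` A i" using H0(2) i by simp
    also have "\<dots> = A i" using hH0 Asub[OF i] by (force simp: image_iff)
    finally show ?thesis .
  qed
  have hbk: "h (g i y) = f i (h y)" if i: "i < m" and y: "y \<in> B i" "y \<in> bk m B" for i y
  proof -
    obtain k1 k2 where kk: "k1 < m" "k2 < m" "k1 \<noteq> k2" "y \<in> B k1" "y \<in> B k2"
      using y(2) unfolding bk_def by blast
    have "h y \<in> A k1" "h y \<in> A k2" using hB kk by blast+
    then have xb: "h y \<in> bk m A" unfolding bk_def using kk by blast
    have xA: "h y \<in> A i" using hB i y by blast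
    have yX: "y \<in> topspace X" using Bsub i y by blast
    have "H0 (f i (h y)) = g i (H0 (h y))" using H0(3) i xA xb by blast
    then have "H0 (f i (h y)) = g i y" using H0h yX by simp
    moreover have "f i (h y) \<in> topspace X" using MM.f_top[OF mmA i] xA by blast
    ultimately show ?thesis using hH0 by metis
  qed
  have c1: "Conj X m A f B g M d H0"
    unfolding Conj_def Conj_axioms_def using mmA mmdB H0 by blast
  have c2: "Conj X m B g A f M d h"
    unfolding Conj_def Conj_axioms_def using mmB mmdA hhom hB hbk H0(4) by blast
  interpret T1: Two X m A f B g M d H0 h
    unfolding Two_def Two_axioms_def using c1 c2 hH0 by blast
  interpret T2: Two X m B g A f M d h H0
    unfolding Two_def Two_axioms_def using c1 c2 H0h by blast
  obtain H where H: "continuous_map X X H"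
    "\<forall>\<epsilon>>0. \<forall>\<^sub>F n in sequentially. \<forall>x\<in>topspace X. d (T1.C1.Hs n x) (H x) < \<epsilon>"
    using T1.C1.lim_exists by blast
  obtain K where K: "continuous_map X X K"
    "\<forall>\<epsilon>>0. \<forall>\<^sub>F n in sequentially. \<forall>x\<in>topspace X. d (T1.C2.Hs n x) (K x) < \<epsilon>"
    using T1.C2.lim_exists by blast
  have KH: "\<forall>x\<in>topspace X. K (H x) = x" using T1.KH[OF H K] by blast
  have HK: "\<forall>y\<in>topspace X. H (K y) = y" using T2.KH[OF K H] by blast
  have "homeomorphic_maps X X H K" unfolding homeomorphic_maps_def using H(1) K(1) KH HK by blast
  then have "homeomorphic_map X X H" by (rule homeomorphic_maps_imp_map)
  moreover have "\<forall>i<m. \<forall>x \<in> A i. H (f i x) = g i (H x)"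
    using T1.C1.conj_limit[OF H] by blast
  ultimately show ?thesis by blast
qed

end
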